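(* Let $A$ be a finite-dimensional simple associative algebra over a field. If $c\in A$ satisfies $cA\subseteq[A,A]$, then $c=0$.
   Context: $[A,A]$ denotes the linear span of all commutators $xy-yx$, $x,y\in A$. *)

theory Defs
  imports Complex_Main
begin

definition assoc_algebra :: "('k::field \<Rightarrow> 'a::ring_1 \<Rightarrow> 'a) \<Rightarrow> bool" where
  "assoc_algebra scale \<longleftrightarrow> vector_space scale \<and>
     (\<forall>k x y. scale k (x * y) = scale k x * y \<and> scale k (x * y) = x * scale k y)"

definition fin_dim_algebra :: "('k::field \<Rightarrow> 'a::ring_1 \<Rightarrow> 'a) \<Rightarrow> bool" where
  "fin_dim_algebra scale \<longleftrightarrow> assoc_algebra scale \<and>
     (\<exists>B. finite_dimensional_vector_space scale B)"

definition two_sided_ideal :: "('k::field \<Rightarrow> 'a::ring_1 \<Rightarrow> 'a) \<Rightarrow> 'a set \<Rightarrow> bool" where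
  "two_sided_ideal scale I \<longleftrightarrow> module.subspace scale I \<and>
     (\<forall>a\<in>I. \<forall>x. x * a \<in> I \<and> a * x \<in> I)"

definition simple_algebra :: "('k::field \<Rightarrow> 'a::ring_1 \<Rightarrow> 'a) \<Rightarrow> bool" where
  "simple_algebra scale \<longleftrightarrow> assoc_algebra scale \<and> (0::'a) \<noteq> 1 \<and>
     (\<forall>I. two_sided_ideal scale I \<longrightarrow> I = {0} \<or> I = UNIV)"

definition commutator_space :: "('k::field \<Rightarrow> 'a::ring_1 \<Rightarrow> 'a) \<Rightarrow> 'a set" where
  "commutator_space scale = module.span scale {x * y - y * x | x y. True}"

end

theory Submission
  imports Defs
begin

locale salg =
  fixes scale :: "'k::field \<Rightarrow> 'a::ring_1 \<Rightarrow> 'a"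
  assumes fd: "fin_dim_algebra scale" and sa: "simple_algebra scale"
begin

lemma vs: "vector_space scale"
  using fd unfolding fin_dim_algebra_def assoc_algebra_def by auto

sublocale vector_space scale by (rule vs)

lemma scale_mult_ax: "\<forall>k x y. scale k (x * y) = scale k x * y \<and> scale k (x * y) = x * scale k y"
  using fd unfolding fin_dim_algebra_def assoc_algebra_def by blast

lemma scale_mult_left: "scale k x * y = scale k (x*y)"
  using scale_mult_ax by metis

lemma scale_mult_right: "x * scale k y = scale k (x*y)"
  using scale_mult_ax by metis

lemma zero_ne_one': "(0::'a) \<noteq> 1"
  using sa unfolding simple_algebra_def by auto

lemma ideal_trivial: "two_sided_ideal scale I \<Longrightarrow> I = {0} \<or> I = UNIV"
  using sa unfolding simple_algebra_def by auto

lemma ex_basis: "\<exists>B. finite_dimensional_vector_space scale B"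
  using fd unfolding fin_dim_algebra_def by auto

lemma span_mult_left:
  assumes "\<forall>g\<in>G. x*g \<in> S" "subspace S" "u \<in> span G"
  shows "x*u \<in> S"
proof -
  have "span G \<subseteq> {u. x*u \<in> S}"
  proof (rule span_minimal)
    show "G \<subseteq> {u. x*u \<in> S}" using assms(1) by auto
    show "subspace {u. x*u \<in> S}"
      by (rule subspaceI) (auto simp: distrib_left scale_mult_right assms(2) subspace_0 subspace_add subspace_scale)
  qed
  then show ?thesis using assms(3) by auto
qed

lemma span_mult_right:
  assumes "\<forall>g\<in>G. g*x \<in> S" "subspace S" "u \<in> span G"
  shows "u*x \<in> S"
proof -
  have "span G \<subseteq> {u. u*x \<in> S}"
  proof (rule span_minimal)
    show "G \<subseteq> {u. u*x \<in> S}" using assms(1) by auto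
    show "subspace {u. u*x \<in> S}"
      by (rule subspaceI) (auto simp: distrib_right scale_mult_left assms(2) subspace_0 subspace_add subspace_scale)
  qed
  then show ?thesis using assms(3) by auto
qed

lemma span_ideal:
  assumes "\<forall>g\<in>G. \<forall>x. x*g \<in> span G \<and> g*x \<in> span G"
  shows "two_sided_ideal scale (span G)"
  unfolding two_sided_ideal_def
proof (intro conjI ballI allI)
  show "subspace (span G)" by simp
  fix a x assume a: "a \<in> span G"
  show "x*a \<in> span G" by (rule span_mult_left[OF _ _ a]) (use assms in auto)
  show "a*x \<in> span G" by (rule span_mult_right[OF _ _ a]) (use assms in auto)
qed

lemma step1:
  assumes c: "c \<noteq> 0" and sub: "{c * a | a. True} \<subseteq> commutator_space scale"
  shows "commutator_space scale = UNIV"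
proof -
  let ?G = "{a * c * b | a b. True}"
  have id: "two_sided_ideal scale (span ?G)"
  proof (rule span_ideal, intro ballI allI conjI)
    fix g x assume "g \<in> ?G"
    then obtain a b where g: "g = a*c*b" by auto
    have "x*g = (x*a)*c*b" by (simp add: g mult.assoc)
    then show "x*g \<in> span ?G" by (intro span_base) auto
    have "g*x = a*c*(b*x)" by (simp add: g mult.assoc)
    then show "g*x \<in> span ?G" by (intro span_base) auto
  qed
  have "c \<in> span ?G" by (rule span_base) (auto intro!: exI[of _ 1])
  with ideal_trivial[OF id] c have U: "span ?G = UNIV" by auto
  have "?G \<subseteq> commutator_space scale"
  proof
    fix g assume "g \<in> ?G"
    then obtain a b where g: "g = a*c*b" by auto
    have eq: "g = (a*(c*b) - (c*b)*a) + c*(b*a)" by (simp add: g mult.assoc)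
    have "a*(c*b) - (c*b)*a \<in> commutator_space scale"
      unfolding commutator_space_def by (rule span_base) auto
    moreover have "c*(b*a) \<in> commutator_space scale" using sub by auto
    ultimately show "g \<in> commutator_space scale" unfolding eq
      by (intro subspace_add) (auto simp: commutator_space_def)
  qed
  then have "span ?G \<subseteq> commutator_space scale"
    by (intro span_minimal) (auto simp: commutator_space_def)
  with U show ?thesis by auto
qed

end

context salg begin

definition lideal :: "'a set \<Rightarrow> bool" where
  "lideal L \<longleftrightarrow> subspace L \<and> (\<forall>a\<in>L. \<forall>x. x*a \<in> L)"

lemma ex_min_lideal:
  "\<exists>L. lideal L \<and> L \<noteq> {0} \<and> (\<forall>L'. lideal L' \<longrightarrow> L' \<noteq> {0} \<longrightarrow> L' \<subseteq> L \<longrightarrow> L' = L)"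
proof -
  obtain B where "finite_dimensional_vector_space scale B" using ex_basis by auto
  then interpret fdv: finite_dimensional_vector_space scale B .
  let ?P = "\<lambda>n. \<exists>L. lideal L \<and> L \<noteq> {0} \<and> dim L = n"
  have ne: "(UNIV::'a set) \<noteq> {0}"
  proof
    assume u: "(UNIV::'a set) = {0}"
    have "(1::'a) \<in> (UNIV::'a set)" by (rule UNIV_I)
    then have "(1::'a) \<in> {0}" by (simp only: u)
    then show False using zero_ne_one' by simp
  qed
  have li: "lideal (UNIV::'a set)" by (simp add: lideal_def)
  have "?P (dim (UNIV::'a set))" by (intro exI[of _ UNIV] conjI li ne refl)
  then have "\<exists>n. ?P n" by (rule exI)
  then have "\<exists>n. ?P n \<and> (\<forall>m<n. \<not> ?P m)" by (rule exists_least_iff[THEN iffD1])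
  then obtain n where n: "?P n \<and> (\<forall>m<n. \<not> ?P m)" ..
  have least: "\<And>m. m < n \<Longrightarrow> \<not> ?P m" by (rule n[THEN conjunct2, rule_format])
  from n[THEN conjunct1] obtain L where L: "lideal L" "L \<noteq> {0}" "dim L = n" by blast
  show ?thesis
  proof (intro exI[of _ L] conjI allI impI)
    fix L' assume L': "lideal L'" "L' \<noteq> {0}" "L' \<subseteq> L"
    have "\<not> dim L' < n"
    proof
      assume "dim L' < n"
      then have "\<not> ?P (dim L')" by (rule least)
      moreover have "?P (dim L')" using L'(1,2) by blast
      ultimately show False by contradiction
    qed
    then have "dim L' \<ge> dim L" using L(3) by linarith
    moreover have "subspace L'" "subspace L" using L'(1) L(1) unfolding lideal_def by blast+
    ultimately show "L' = L"
      using fdv.subspace_dim_equal[of L' L] L'(3) by blast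
  next
    show "lideal L" by (rule L(1))
    show "L \<noteq> {0}" by (rule L(2))
  qed
qed

end

context salg begin
lemma lideal_image:
  "lideal L \<Longrightarrow> lideal {l * x | l. l \<in> L}"
  unfolding lideal_def
proof (intro conjI ballI allI)
  assume L: "subspace L \<and> (\<forall>a\<in>L. \<forall>x. x * a \<in> L)"
  show "subspace {l * x | l. l \<in> L}"
  proof (rule subspaceI)
    show "0 \<in> {l * x | l. l \<in> L}" using L subspace_0 by force
    fix u v assume "u \<in> {l * x | l. l \<in> L}" "v \<in> {l * x | l. l \<in> L}"
    then obtain l m where "u = l*x" "v = m*x" "l \<in> L" "m \<in> L" by auto
    then show "u + v \<in> {l * x | l. l \<in> L}"
      using L subspace_add by (auto intro!: exI[of _ "l+m"] simp: distrib_right)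
  next
    fix c u assume "u \<in> {l * x | l. l \<in> L}"
    then obtain l where "u = l*x" "l \<in> L" by auto
    then show "scale c u \<in> {l * x | l. l \<in> L}"
      using L subspace_scale by (auto intro!: exI[of _ "scale c l"] simp: scale_mult_left)
  qed
  fix a y assume "a \<in> {l * x | l. l \<in> L}"
  then obtain l where "a = l*x" "l \<in> L" by auto
  then show "y * a \<in> {l * x | l. l \<in> L}"
    using L by (auto intro!: exI[of _ "y*l"] simp: mult.assoc)
qed

lemma lideal_kernel:
  "lideal L \<Longrightarrow> lideal {l \<in> L. l * x = 0}"
  unfolding lideal_def
proof (intro conjI ballI allI)
  assume L: "subspace L \<and> (\<forall>a\<in>L. \<forall>x. x * a \<in> L)"
  show "subspace {l \<in> L. l * x = 0}"
    by (rule subspaceI) (use L in \<open>auto simp: subspace_0 subspace_add subspace_scale distrib_right scale_mult_left\<close>)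
  fix a y assume "a \<in> {l \<in> L. l * x = 0}"
  then show "y * a \<in> {l \<in> L. l * x = 0}" using L by (auto simp: mult.assoc)
qed

end

context salg begin
lemma ex_idem:
  "\<exists>L e. lideal L \<and> (\<forall>w\<in>L. w \<noteq> 0 \<longrightarrow> (\<forall>v\<in>L. \<exists>a. a*w = v)) \<and>
     e \<in> L \<and> e*e = e \<and> e \<noteq> 0 \<and> (\<forall>v\<in>L. v*e = v)"
proof -
  obtain L where L: "lideal L" "L \<noteq> {0}"
    and Lmin: "\<And>L'. lideal L' \<Longrightarrow> L' \<noteq> {0} \<Longrightarrow> L' \<subseteq> L \<Longrightarrow> L' = L"
    using ex_min_lideal by blast
  have L0: "0 \<in> L" using L by (auto simp: lideal_def subspace_0)
  have Lmul: "\<And>a x. a \<in> L \<Longrightarrow> x*a \<in> L" using L by (auto simp: lideal_def)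
  have P1: "\<forall>w\<in>L. w \<noteq> 0 \<longrightarrow> (\<forall>v\<in>L. \<exists>a. a*w = v)"
  proof (intro ballI impI)
    fix w v assume w: "w \<in> L" "w \<noteq> 0" and v: "v \<in> L"
    let ?M = "{l * w | l. l \<in> (UNIV::'a set)}"
    have "lideal ?M" using lideal_image[of UNIV w] by (simp add: lideal_def)
    moreover have "?M \<noteq> {0}" using w by (auto intro!: exI[of _ w] exI[of _ 1])
    moreover have "?M \<subseteq> L" using w Lmul by auto
    ultimately have "?M = L" using Lmin by blast
    then show "\<exists>a. a*w = v" using v by auto
  qed
  have "\<exists>x\<in>L. \<exists>y\<in>L. y*x \<noteq> 0"
  proof (rule ccontr)
    assume "\<not> ?thesis"
    then have z: "\<And>x y. x \<in> L \<Longrightarrow> y \<in> L \<Longrightarrow> y*x = 0" by blast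
    let ?G = "{l * a | l a. l \<in> L}"
    have id: "two_sided_ideal scale (span ?G)"
    proof (rule span_ideal, intro ballI allI conjI)
      fix g x assume "g \<in> ?G"
      then obtain l a where g: "g = l*a" "l \<in> L" by blast
      have "x*g = (x*l)*a" by (simp add: g mult.assoc)
      moreover have "x*l \<in> L" using g Lmul by blast
      ultimately have "x*g \<in> ?G" by blast
      then show "x*g \<in> span ?G" by (rule span_base)
      have "g*x = l*(a*x)" by (simp add: g mult.assoc)
      then have "g*x \<in> ?G" using g by blast
      then show "g*x \<in> span ?G" by (rule span_base)
    qed
    have "\<exists>l\<in>L. l \<noteq> 0" using L(2) L0 by blast
    then obtain l where l: "l \<in> L" "l \<noteq> 0" by blast
    have "l \<in> ?G" by (rule CollectI, rule exI[of _ l], rule exI[of _ 1]) (simp add: l)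
    then have "l \<in> span ?G" by (rule span_base)
    then have "span ?G \<noteq> {0}" using l(2) by blast
    then have U: "span ?G = UNIV" using ideal_trivial[OF id] by blast
    have GG: "\<And>g h. g \<in> ?G \<Longrightarrow> h \<in> ?G \<Longrightarrow> g*h \<in> {0}"
    proof -
      fix g h assume "g \<in> ?G" "h \<in> ?G"
      then obtain l a m b where lm: "g = l*a" "l \<in> L" "h = m*b" "m \<in> L" by blast
      then have "g*h = (l*(a*m))*b" by (simp add: mult.assoc)
      also have "l*(a*m) = 0" using z[of "a*m" l] Lmul[of m a] lm by blast
      finally show "g*h \<in> {0}" by simp
    qed
    have one: "(1::'a) \<in> span ?G" by (subst U) (rule UNIV_I)
    have H: "\<forall>h\<in>?G. (1::'a)*h \<in> {0}"
    proof
      fix h assume h: "h \<in> ?G"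
      show "1*h \<in> {0}"
        by (rule span_mult_right[where G="?G", OF _ _ one]) (use GG h in auto)
    qed
    have "(1::'a)*1 \<in> {0}"
      by (rule span_mult_left[where G="?G", OF H _ one]) simp
    then show False using zero_ne_one' by simp
  qed
  then obtain x y where xy: "x \<in> L" "y \<in> L" "y*x \<noteq> 0" by auto
  let ?Lx = "{l * x | l. l \<in> L}"
  have "lideal ?Lx" using lideal_image[OF L(1)] .
  moreover have "?Lx \<noteq> {0}" using xy by auto
  moreover have "?Lx \<subseteq> L" using xy Lmul by auto
  ultimately have Lx: "?Lx = L" using Lmin by blast
  have "x \<in> ?Lx" by (subst Lx) (rule xy(1))
  then obtain e where e: "e \<in> L" "e*x = x" by auto
  let ?N = "{l \<in> L. l * x = 0}"
  have N0: "?N = {0}"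
  proof (rule ccontr)
    assume "?N \<noteq> {0}"
    then have "?N = L" using Lmin[OF lideal_kernel[OF L(1)]] by auto
    then show False using xy by auto
  qed
  have "e*e - e \<in> L" using e L by (auto simp: lideal_def subspace_diff)
  moreover have "(e*e - e)*x = 0" using e by (simp add: mult.assoc left_diff_distrib)
  ultimately have "e*e - e \<in> ?N" by auto
  then have ee: "e*e = e" using N0 by auto
  have enz: "e \<noteq> 0" using e xy by auto
  have "\<forall>v\<in>L. v*e = v"
  proof
    fix v assume "v \<in> L"
    then obtain a where "a*e = v" using P1 e enz by blast
    then show "v*e = v" using ee by (metis mult.assoc)
  qed
  then show ?thesis using L P1 e ee enz by blast
qed

end

locale mainloc = salg scale for scale :: "'k::field \<Rightarrow> 'a::ring_1 \<Rightarrow> 'a" +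
  fixes L :: "'a set" and e :: 'a and F :: "'a set"
  assumes lid: "lideal L"
  and P1: "\<And>w v. w \<in> L \<Longrightarrow> w \<noteq> 0 \<Longrightarrow> v \<in> L \<Longrightarrow> \<exists>a. a*w = v"
  and eL: "e \<in> L" and ee: "e*e = e" and enz: "e \<noteq> 0" and re: "\<And>v. v \<in> L \<Longrightarrow> v*e = v"
  and FD: "\<And>f. f \<in> F \<Longrightarrow> e*f = f \<and> f*e = f"
  and Fcomm: "\<And>f g. f \<in> F \<Longrightarrow> g \<in> F \<Longrightarrow> f*g = g*f"
  and Fmax: "\<And>x. e*x = x \<Longrightarrow> x*e = x \<Longrightarrow> (\<forall>f\<in>F. x*f = f*x) \<Longrightarrow> x \<in> F"
begin

lemma Lsub: "subspace L" using lid by (simp add: lideal_def)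
lemma Lmul: "a \<in> L \<Longrightarrow> x*a \<in> L" using lid by (simp add: lideal_def)
lemma L0: "0 \<in> L" using Lsub by (rule subspace_0)
lemma Ladd: "a \<in> L \<Longrightarrow> b \<in> L \<Longrightarrow> a + b \<in> L" using Lsub by (rule subspace_add)
lemma Ldiff: "a \<in> L \<Longrightarrow> b \<in> L \<Longrightarrow> a - b \<in> L" using Lsub by (rule subspace_diff)
lemma Lneg: "a \<in> L \<Longrightarrow> - a \<in> L" using Lsub by (rule subspace_neg)
lemma Lsum: "(\<And>x. x \<in> B \<Longrightarrow> f x \<in> L) \<Longrightarrow> sum f B \<in> L" using Lsub by (rule subspace_sum)

lemma eel: "e*(e*z) = e*z" by (metis ee mult.assoc)

lemma DL: "e*x = x \<Longrightarrow> x*e = x \<Longrightarrow> x \<in> L"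
  by (metis Lmul eL)

lemma FL: "f \<in> F \<Longrightarrow> f \<in> L" using FD DL by blast

lemma LF: "u \<in> L \<Longrightarrow> f \<in> F \<Longrightarrow> u*f \<in> L" using FL Lmul by blast

lemma Ddiv:
  assumes d: "e*d = d" "d*e = d" "d \<noteq> 0"
  shows "\<exists>d'. e*d' = d' \<and> d'*e = d' \<and> d'*d = e \<and> d*d' = e"
proof -
  have linv: "\<exists>d'. e*d' = d' \<and> d'*e = d' \<and> d'*x = e" if x: "e*x = x" "x*e = x" "x \<noteq> 0" for x
  proof -
    obtain b where b: "b*x = e" using P1[of x e] x DL eL by blast
    have "(e*b*e)*x = e*b*(e*x)" by (simp add: mult.assoc)
    also have "\<dots> = e" using b x ee by (simp add: mult.assoc)
    finally show ?thesis using ee by (intro exI[of _ "e*b*e"]) (simp add: mult.assoc eel)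
  qed
  obtain d' where d': "e*d' = d'" "d'*e = d'" "d'*d = e" using linv[OF d] by blast
  have "d' \<noteq> 0" using d'(3) enz by auto
  then obtain d'' where d'': "e*d'' = d''" "d''*e = d''" "d''*d' = e" using linv[OF d'(1,2)] by blast
  have "d = d''" by (metis d''(2,3) d'(3) d(1) mult.assoc)
  then show ?thesis using d' d'' by blast
qed

lemma uD0:
  assumes "u \<in> L" "u \<noteq> 0" "e*x = x" "x*e = x" "u*x = 0"
  shows "x = 0"
proof (rule ccontr)
  assume "x \<noteq> 0"
  then obtain z where "x*z = e" using Ddiv assms by blast
  then have "u = u*x*z" using re[OF assms(1)] by (simp add: mult.assoc)
  then show False using assms by simp
qed

lemma eF: "e \<in> F" using Fmax[of e] ee FD by auto
lemma F0: "0 \<in> F" using Fmax[of 0] by auto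
lemma Fadd: "f \<in> F \<Longrightarrow> g \<in> F \<Longrightarrow> f + g \<in> F"
  using Fmax[of "f+g"] FD Fcomm by (simp add: distrib_left distrib_right)
lemma Fneg: "f \<in> F \<Longrightarrow> - f \<in> F"
  using Fmax[of "-f"] FD Fcomm by simp
lemma Fdiff: "f \<in> F \<Longrightarrow> g \<in> F \<Longrightarrow> f - g \<in> F"
  using Fadd Fneg by (metis diff_conv_add_uminus)
lemma Fmult: "f \<in> F \<Longrightarrow> g \<in> F \<Longrightarrow> f * g \<in> F"
  using Fmax[of "f*g"] FD Fcomm by (simp add: mult.assoc) (metis mult.assoc)
lemma Fscale: "scale c e \<in> F"
proof (rule Fmax)
  show "e * scale c e = scale c e" "scale c e * e = scale c e"
    by (simp_all add: scale_mult_left scale_mult_right ee)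
  show "\<forall>f\<in>F. scale c e * f = f * scale c e"
    using FD by (simp add: scale_mult_left scale_mult_right)
qed
lemma Finv: "f \<in> F \<Longrightarrow> f \<noteq> 0 \<Longrightarrow> \<exists>g\<in>F. f*g = e \<and> g*f = e"
proof -
  assume f: "f \<in> F" "f \<noteq> 0"
  then obtain g where g: "e*g = g" "g*e = g" "g*f = e" "f*g = e" using Ddiv FD by blast
  have "g \<in> F"
  proof (rule Fmax[OF g(1,2)], rule ballI)
    fix h assume h: "h \<in> F"
    have "g*h = g*(h*f)*g" using g FD[OF h] by (metis mult.assoc)
    also have "\<dots> = g*(f*h)*g" using Fcomm f h by simp
    also have "\<dots> = h*g" using g FD[OF h] by (metis mult.assoc)
    finally show "g*h = h*g" .
  qed
  then show ?thesis using g by blast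
qed
lemma Fsum: "(\<And>j. j \<in> J \<Longrightarrow> g j \<in> F) \<Longrightarrow> sum g J \<in> F"
proof (induction J rule: infinite_finite_induct)
  case (infinite A) then show ?case using F0 by simp
next
  case empty then show ?case using F0 by simp
next
  case (insert x A) then show ?case using Fadd by simp
qed

lemma scale_as_F: "v \<in> L \<Longrightarrow> scale c v = v * scale c e"
  using re by (simp add: scale_mult_right)

end

context mainloc begin

definition indepF :: "'a set \<Rightarrow> bool" where
  "indepF S \<longleftrightarrow> finite S \<and> S \<subseteq> L \<and>
     (\<forall>c. (\<forall>u\<in>S. c u \<in> F) \<longrightarrow> (\<Sum>u\<in>S. u * c u) = 0 \<longrightarrow> (\<forall>u\<in>S. c u = 0))"

definition inspan :: "'a set \<Rightarrow> 'a \<Rightarrow> bool" where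
  "inspan S v \<longleftrightarrow> (\<exists>c. (\<forall>u\<in>S. c u \<in> F) \<and> v = (\<Sum>u\<in>S. u * c u))"

lemma indepD: "indepF S \<Longrightarrow> (\<And>u. u \<in> S \<Longrightarrow> c u \<in> F) \<Longrightarrow> (\<Sum>u\<in>S. u * c u) = 0 \<Longrightarrow> u \<in> S \<Longrightarrow> c u = 0"
  unfolding indepF_def by blast

end

context mainloc begin
lemma indep_subset:
  assumes S: "indepF S" and T: "T \<subseteq> S"
  shows "indepF T"
  unfolding indepF_def
proof (intro conjI allI impI ballI)
  show "finite T" using S T finite_subset unfolding indepF_def by blast
  show "T \<subseteq> L" using S T unfolding indepF_def by blast
  fix c u assume cF: "\<forall>u\<in>T. c u \<in> F" and s: "(\<Sum>u\<in>T. u * c u) = 0" and u: "u \<in> T"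
  let ?c = "\<lambda>u. if u \<in> T then c u else 0"
  have fS: "finite S" using S unfolding indepF_def by blast
  have "(\<Sum>u\<in>S. u * ?c u) = (\<Sum>u\<in>T. u * ?c u)"
    by (rule sum.mono_neutral_right[OF fS T]) auto
  also have "\<dots> = (\<Sum>u\<in>T. u * c u)" by (rule sum.cong) auto
  finally have "(\<Sum>u\<in>S. u * ?c u) = 0" using s by simp
  moreover have "\<And>u. u \<in> S \<Longrightarrow> ?c u \<in> F" using cF F0 by auto
  ultimately have "?c u = 0" using indepD[OF S, of ?c u] u T by blast
  then show "c u = 0" using u by simp
qed

end

context mainloc begin
lemma indep_not0:
  assumes S: "indepF S" shows "0 \<notin> S"
proof
  assume z: "0 \<in> S"
  let ?c = "\<lambda>u. if u = 0 then e else (0::'a)"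
  have s: "(\<Sum>u\<in>S. u * ?c u) = 0" by (rule sum.neutral) auto
  have cF: "\<And>u. u \<in> S \<Longrightarrow> ?c u \<in> F" using eF F0 by auto
  have "e = 0" using indepD[OF S cF s z] by simp
  then show False using enz by simp
qed

end

context mainloc begin
lemma indep_k:
  assumes S: "indepF S" shows "independent S"
  unfolding dependent_explicit
proof
  assume "\<exists>t u. finite t \<and> t \<subseteq> S \<and> (\<Sum>v\<in>t. scale (u v) v) = 0 \<and> (\<exists>v\<in>t. u v \<noteq> 0)"
  then obtain t u v where t: "finite t" "t \<subseteq> S" "(\<Sum>v\<in>t. scale (u v) v) = 0" and v: "v \<in> t" "u v \<noteq> 0"
    by blast
  let ?c = "\<lambda>w. if w \<in> t then scale (u w) e else 0"
  have fS: "finite S" and SL: "S \<subseteq> L" using S unfolding indepF_def by blast+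
  have "(\<Sum>w\<in>S. w * ?c w) = (\<Sum>w\<in>t. w * ?c w)"
    by (rule sum.mono_neutral_right[OF fS t(2)]) auto
  also have "\<dots> = (\<Sum>w\<in>t. scale (u w) w)"
  proof (rule sum.cong)
    fix w assume w: "w \<in> t"
    then have "w \<in> L" using t SL by blast
    then show "w * ?c w = scale (u w) w" using w by (simp add: scale_as_F)
  qed simp
  finally have "(\<Sum>w\<in>S. w * ?c w) = 0" using t by simp
  moreover have "\<And>w. w \<in> S \<Longrightarrow> ?c w \<in> F" using Fscale F0 by auto
  ultimately have "?c v = 0" using indepD[OF S, of ?c v] v t by blast
  then show False using v enz by simp
qed

end

context mainloc begin
lemma ex_Fbasis: "\<exists>B. indepF B \<and> (\<forall>v\<in>L. inspan B v)"
proof -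
  obtain Bk where "finite_dimensional_vector_space scale Bk" using ex_basis by auto
  then interpret fdv: finite_dimensional_vector_space scale Bk .
  have bound: "card S \<le> card Bk" if "indepF S" for S
    using independent_span_bound[OF fdv.finite_Basis indep_k[OF that]] fdv.span_Basis by auto
  let ?K = "{card S | S. indepF S}"
  have "indepF {}" unfolding indepF_def by simp
  then have Kne: "?K \<noteq> {}" by blast
  have Kfin: "finite ?K" by (rule finite_subset[of _ "{..card Bk}"]) (auto dest: bound)
  have "Max ?K \<in> ?K" using Kfin Kne by (rule Max_in)
  then obtain B where B: "indepF B" "card B = Max ?K" by auto
  have fB: "finite B" and BL: "B \<subseteq> L" using B unfolding indepF_def by blast+
  have "inspan B v" if v: "v \<in> L" for v
  proof (rule ccontr)
    assume nsp: "\<not> inspan B v"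
    have vB: "v \<notin> B"
    proof
      assume vB: "v \<in> B"
      let ?c = "\<lambda>u. if u = v then e else (0::'a)"
      have "(\<Sum>u\<in>B. u * ?c u) = v * e"
        using vB fB by (simp add: if_distrib[of "\<lambda>x. _ * x"] sum.delta' cong: if_cong)
      then have "inspan B v" unfolding inspan_def using re[OF v] eF F0
        by (intro exI[of _ ?c]) auto
      then show False using nsp by blast
    qed
    have "indepF (insert v B)"
      unfolding indepF_def
    proof (intro conjI allI impI ballI)
      show "finite (insert v B)" using fB by simp
      show "insert v B \<subseteq> L" using BL v by simp
      fix c u assume cF: "\<forall>u\<in>insert v B. c u \<in> F" and s: "(\<Sum>u\<in>insert v B. u * c u) = 0"
        and u: "u \<in> insert v B"
      have s2: "v * c v + (\<Sum>u\<in>B. u * c u) = 0" using s fB vB by simp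
      have cv: "c v = 0"
      proof (rule ccontr)
        assume "c v \<noteq> 0"
        then obtain g where g: "g \<in> F" "c v * g = e" using Finv cF by blast
        have "v = v * (c v * g)" using g re[OF v] by simp
        also have "\<dots> = (v * c v) * g" by (simp add: mult.assoc)
        also have "v * c v = - (\<Sum>u\<in>B. u * c u)" using s2 by (simp add: eq_neg_iff_add_eq_0)
        also have "- (\<Sum>u\<in>B. u * c u) * g = (\<Sum>u\<in>B. u * (- (c u * g)))"
          by (simp add: sum_distrib_right mult.assoc sum_negf)
        finally have "inspan B v" unfolding inspan_def using cF g Fneg Fmult
          by (intro exI[of _ "\<lambda>u. - (c u * g)"]) auto
        then show False using nsp by blast
      qed
      then have "(\<Sum>u\<in>B. u * c u) = 0" using s2 by simp
      then have "\<forall>u\<in>B. c u = 0" using indepD[OF B(1), of c] cF by blast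
      then show "c u = 0" using u cv by blast
    qed
    then have "card (insert v B) \<in> ?K" by blast
    with Kfin have "card (insert v B) \<le> Max ?K" by (rule Max_ge)
    then show False using B(2) fB vB by simp
  qed
  then show ?thesis using B by blast
qed


end

locale basisloc = mainloc scale L e F for scale :: "'k::field \<Rightarrow> 'a::ring_1 \<Rightarrow> 'a" and L e F +
  fixes B :: "'a set"
  assumes Bind: "indepF B" and Bspan: "\<And>v. v \<in> L \<Longrightarrow> inspan B v"
begin

lemma fB: "finite B" and BL: "B \<subseteq> L" using Bind unfolding indepF_def by blast+

definition coord :: "'a \<Rightarrow> 'a \<Rightarrow> 'a" where
  "coord v = (SOME c. (\<forall>u\<in>B. c u \<in> F) \<and> v = (\<Sum>u\<in>B. u * c u))"

lemma coord: assumes "v \<in> L" shows "\<forall>u\<in>B. coord v u \<in> F" "v = (\<Sum>u\<in>B. u * coord v u)"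
proof -
  have "\<exists>c. (\<forall>u\<in>B. c u \<in> F) \<and> v = (\<Sum>u\<in>B. u * c u)" using Bspan[OF assms] unfolding inspan_def .
  then have "(\<forall>u\<in>B. coord v u \<in> F) \<and> v = (\<Sum>u\<in>B. u * coord v u)"
    unfolding coord_def by (rule someI_ex)
  then show "\<forall>u\<in>B. coord v u \<in> F" "v = (\<Sum>u\<in>B. u * coord v u)" by blast+
qed

lemma coordF: "v \<in> L \<Longrightarrow> u \<in> B \<Longrightarrow> coord v u \<in> F" using coord(1) by blast

lemma coord_unique:
  assumes v: "v \<in> L" and cF: "\<And>u. u \<in> B \<Longrightarrow> c u \<in> F" and s: "v = (\<Sum>u\<in>B. u * c u)" and u: "u \<in> B"
  shows "coord v u = c u"
proof -
  have "(\<Sum>u\<in>B. u * (coord v u - c u)) = (\<Sum>u\<in>B. u * coord v u) - (\<Sum>u\<in>B. u * c u)"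
    by (simp add: right_diff_distrib sum_subtractf)
  also have "\<dots> = 0" using coord(2)[OF v] s by simp
  finally have "coord v u - c u = 0"
    using indepD[OF Bind, of "\<lambda>u. coord v u - c u" u] u coordF[OF v] cF Fdiff by blast
  then show ?thesis by simp
qed

lemma coord_add: "v \<in> L \<Longrightarrow> w \<in> L \<Longrightarrow> u \<in> B \<Longrightarrow> coord (v + w) u = coord v u + coord w u"
  apply (rule coord_unique)
  using Ladd coordF Fadd apply auto[2]
   apply (subst coord(2)[of v], assumption, subst coord(2)[of w], assumption)
   apply (simp add: distrib_left sum.distrib)
  by simp

lemma coord_neg: "v \<in> L \<Longrightarrow> u \<in> B \<Longrightarrow> coord (- v) u = - coord v u"
  apply (rule coord_unique)
  using Lneg coordF Fneg apply auto[2]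
   apply (subst coord(2)[of v], assumption)
   apply (simp add: sum_negf)
  by simp

lemma coord_mulF: "v \<in> L \<Longrightarrow> f \<in> F \<Longrightarrow> u \<in> B \<Longrightarrow> coord (v * f) u = coord v u * f"
  apply (rule coord_unique)
  using LF coordF Fmult apply auto[2]
   apply (subst coord(2)[of v], assumption)
   apply (simp add: sum_distrib_right mult.assoc)
  by simp

lemma coord_0: "u \<in> B \<Longrightarrow> coord 0 u = 0"
  by (rule coord_unique) (auto simp: L0 F0)

lemma coord_basis: "b \<in> B \<Longrightarrow> u \<in> B \<Longrightarrow> coord b u = (if u = b then e else 0)"
proof (rule coord_unique)
  assume b: "b \<in> B" and u: "u \<in> B"
  show "b \<in> L" using b BL by blast
  show "\<And>u. u \<in> B \<Longrightarrow> (if u = b then e else 0) \<in> F" using eF F0 by auto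
  have "(\<Sum>u\<in>B. u * (if u = b then e else 0)) = (\<Sum>u\<in>B. if u = b then b * e else 0)"
    by (rule sum.cong) auto
  also have "\<dots> = b * e" using b fB by simp
  also have "\<dots> = b" using re b BL by blast
  finally show "b = (\<Sum>u\<in>B. u * (if u = b then e else 0))" by simp
qed

lemma coord_mul_expand:
  assumes w: "w \<in> L" and i: "i \<in> B"
  shows "coord (a * w) i = (\<Sum>j\<in>B. coord (a * j) i * coord w j)"
proof (rule coord_unique[OF Lmul[OF w] _ _ i])
  fix i' assume i': "i' \<in> B"
  show "(\<Sum>j\<in>B. coord (a * j) i' * coord w j) \<in> F"
    by (intro Fsum Fmult coordF Lmul w i') (use BL in auto)
next
  have "a * w = a * (\<Sum>j\<in>B. j * coord w j)" using coord(2)[OF w] by simp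
  also have "\<dots> = (\<Sum>j\<in>B. (a * j) * coord w j)" by (simp add: sum_distrib_left mult.assoc)
  also have "\<dots> = (\<Sum>j\<in>B. (\<Sum>i\<in>B. i * coord (a*j) i) * coord w j)"
  proof (rule sum.cong)
    fix j assume "j \<in> B"
    then have "a * j \<in> L" using Lmul BL by blast
    then show "(a * j) * coord w j = (\<Sum>i\<in>B. i * coord (a*j) i) * coord w j"
      using coord(2) by metis
  qed simp
  also have "\<dots> = (\<Sum>j\<in>B. \<Sum>i\<in>B. i * (coord (a*j) i * coord w j))"
    by (simp add: sum_distrib_right mult.assoc)
  also have "\<dots> = (\<Sum>i\<in>B. \<Sum>j\<in>B. i * (coord (a*j) i * coord w j))"
    by (rule sum.swap)
  also have "\<dots> = (\<Sum>i\<in>B. i * (\<Sum>j\<in>B. coord (a * j) i * coord w j))"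
    by (simp add: sum_distrib_left)
  finally show "a * w = (\<Sum>i\<in>B. i * (\<Sum>j\<in>B. coord (a * j) i * coord w j))" .
qed

lemma LmB: "u \<in> B \<Longrightarrow> a * u \<in> L" using Lmul BL by blast

definition tr :: "'a \<Rightarrow> 'a" where "tr a = (\<Sum>u\<in>B. coord (a * u) u)"

lemma tr_comm: "tr (x * y) = tr (y * x)"
proof -
  have Lm: "\<And>a j. j \<in> B \<Longrightarrow> a * j \<in> L" using Lmul BL by blast
  have "tr (x * y) = (\<Sum>u\<in>B. \<Sum>j\<in>B. coord (x * j) u * coord (y * u) j)"
    unfolding tr_def by (rule sum.cong) (auto simp: mult.assoc coord_mul_expand Lm)
  also have "\<dots> = (\<Sum>u\<in>B. \<Sum>j\<in>B. coord (y * u) j * coord (x * j) u)"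
    by (intro sum.cong refl) (simp add: Fcomm coordF Lm)
  also have "\<dots> = (\<Sum>j\<in>B. \<Sum>u\<in>B. coord (y * u) j * coord (x * j) u)"
    by (rule sum.swap)
  also have "\<dots> = tr (y * x)"
    unfolding tr_def by (rule sum.cong) (auto simp: mult.assoc coord_mul_expand Lm)
  finally show ?thesis .
qed

lemma tr_add: "tr (a + b) = tr a + tr b"
proof -
  have "tr (a + b) = (\<Sum>u\<in>B. coord (a*u) u + coord (b*u) u)"
    unfolding tr_def distrib_right by (intro sum.cong refl coord_add LmB)
  then show ?thesis unfolding tr_def by (simp add: sum.distrib)
qed

lemma tr_neg: "tr (- a) = - tr a"
proof -
  have "tr (- a) = (\<Sum>u\<in>B. - coord (a*u) u)"
    unfolding tr_def mult_minus_left by (intro sum.cong refl coord_neg LmB)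
  then show ?thesis unfolding tr_def by (simp add: sum_negf)
qed

lemma tr_scale: "tr (scale c a) = tr a * scale c e"
proof -
  have "tr (scale c a) = (\<Sum>u\<in>B. coord ((a * u) * scale c e) u)"
    unfolding tr_def
    by (intro sum.cong refl) (metis scale_as_F scale_mult_left Lmul BL subsetD)
  also have "\<dots> = (\<Sum>u\<in>B. coord (a * u) u * scale c e)"
    by (intro sum.cong refl coord_mulF LmB Fscale)
  also have "\<dots> = tr a * scale c e" unfolding tr_def by (simp add: sum_distrib_right)
  finally show ?thesis .
qed

lemma tr_0: "tr 0 = 0" unfolding tr_def by (simp add: coord_0)

lemma tr_comm_space: "a \<in> commutator_space scale \<Longrightarrow> tr a = 0"
proof -
  have "subspace {a. tr a = 0}"
    by (rule subspaceI) (auto simp: tr_0 tr_add tr_scale)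
  moreover have "{x * y - y * x | x y. True} \<subseteq> {a. tr a = 0}"
  proof
    fix z :: 'a assume "z \<in> {x * y - y * x | x y. True}"
    then obtain x y where z: "z = x * y - y * x" by blast
    have "tr z = tr (x * y) + - tr (y * x)" unfolding z diff_conv_add_uminus tr_add tr_neg ..
    then show "z \<in> {a. tr a = 0}" using tr_comm[of x y] by simp
  qed
  ultimately have "commutator_space scale \<subseteq> {a. tr a = 0}"
    unfolding commutator_space_def by (rule span_minimal[rotated])
  then show "a \<in> commutator_space scale \<Longrightarrow> tr a = 0" by blast
qed

end

context mainloc begin

definition ev :: "('a \<times> 'a) list \<Rightarrow> 'a \<Rightarrow> 'a" where
  "ev T x = sum_list (map (\<lambda>p. fst p * x * snd p) T)"

definition inE :: "('a \<times> 'a) list \<Rightarrow> bool" where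
  "inE T \<longleftrightarrow> (\<forall>p\<in>set T. snd p \<in> F)"

lemma ev_Nil[simp]: "ev [] x = 0" by (simp add: ev_def)
lemma ev_Cons[simp]: "ev (p # T) x = fst p * x * snd p + ev T x" by (simp add: ev_def)
lemma ev_append[simp]: "ev (T @ T') x = ev T x + ev T' x" by (simp add: ev_def)
lemma ev_lmul: "ev (map (\<lambda>p. (a * fst p, snd p)) T) x = a * ev T x"
  by (induction T) (simp_all add: distrib_left mult.assoc)
lemma ev_rmul: "ev (map (\<lambda>p. (fst p, snd p * f)) T) x = ev T x * f"
  by (induction T) (simp_all add: distrib_right mult.assoc)
lemma ev_neg: "ev (map (\<lambda>p. (- fst p, snd p)) T) x = - ev T x"
  by (induction T) simp_all
lemma ev_concat: "ev (concat (map Tf ws)) x = sum_list (map (\<lambda>u. ev (Tf u) x) ws)"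
  by (induction ws) simp_all

lemma inE_append: "inE T \<Longrightarrow> inE T' \<Longrightarrow> inE (T @ T')" by (auto simp: inE_def)
lemma inE_lmul: "inE T \<Longrightarrow> inE (map (\<lambda>p. (a * fst p, snd p)) T)" by (auto simp: inE_def)
lemma inE_rmul: "inE T \<Longrightarrow> f \<in> F \<Longrightarrow> inE (map (\<lambda>p. (fst p, snd p * f)) T)"
  by (auto simp: inE_def Fmult)
lemma inE_neg: "inE T \<Longrightarrow> inE (map (\<lambda>p. (- fst p, snd p)) T)" by (auto simp: inE_def)
lemma inE_concat: "(\<And>u. u \<in> set ws \<Longrightarrow> inE (Tf u)) \<Longrightarrow> inE (concat (map Tf ws))"
  by (auto simp: inE_def)
lemma inE_Cons: "snd p \<in> F \<Longrightarrow> inE T \<Longrightarrow> inE (p # T)" by (auto simp: inE_def)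

lemma ev_L: "inE T \<Longrightarrow> x \<in> L \<Longrightarrow> ev T x \<in> L"
proof (induction T)
  case Nil then show ?case by (simp add: L0)
next
  case (Cons p T)
  then have "snd p \<in> F" "inE T" by (auto simp: inE_def)
  then show ?case using Cons by (simp add: Ladd LF Lmul)
qed

lemma density:
  "finite W \<Longrightarrow> indepF (insert v W) \<Longrightarrow> v \<notin> W \<Longrightarrow>
     \<exists>T. inE T \<and> (\<forall>u\<in>W. ev T u = 0) \<and> ev T v = v"
proof (induction "card W" arbitrary: W v rule: less_induct)
  case less
  note fW = less.prems(1) and ind = less.prems(2) and vW = less.prems(3)
  have vL: "v \<in> L" and WL: "W \<subseteq> L" using ind unfolding indepF_def by auto
  have indW: "indepF W" using indep_subset[OF ind] by blast
  have IH: "\<exists>T. inE T \<and> (\<forall>u'\<in>W - {u}. ev T u' = 0) \<and> ev T u = u" if u: "u \<in> W" for u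
  proof -
    have "card (W - {u}) < card W" using fW u by (rule card_Diff1_less)
    moreover have "finite (W - {u})" using fW by simp
    moreover have "indepF (insert u (W - {u}))" using u indW by (simp add: insert_absorb)
    moreover have "u \<notin> W - {u}" by simp
    ultimately show ?thesis using less.hyps by blast
  qed
  then have "\<forall>u\<in>W. \<exists>T. inE T \<and> (\<forall>u'\<in>W - {u}. ev T u' = 0) \<and> ev T u = u" by blast
  then obtain Tf where Tf: "\<And>u. u \<in> W \<Longrightarrow> inE (Tf u) \<and> (\<forall>u'\<in>W - {u}. ev (Tf u) u' = 0) \<and> ev (Tf u) u = u"
    by (metis bchoice)
  show ?case
  proof (cases "\<exists>T. inE T \<and> (\<forall>u\<in>W. ev T u = 0) \<and> ev T v \<noteq> 0")
    case True
    then obtain T where T: "inE T" "\<forall>u\<in>W. ev T u = 0" "ev T v \<noteq> 0" by blast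
    have "ev T v \<in> L" using ev_L[OF T(1) vL] .
    then obtain a where a: "a * ev T v = v" using P1 T(3) vL by blast
    show ?thesis
      by (rule exI[of _ "map (\<lambda>p. (a * fst p, snd p)) T"]) (use T a in \<open>simp add: ev_lmul inE_lmul\<close>)
  next
    case False
    then have kill: "\<And>T. inE T \<Longrightarrow> (\<forall>u\<in>W. ev T u = 0) \<Longrightarrow> ev T v = 0" by blast
    have dex: "\<exists>d\<in>F. ev (Tf u) v = u * d" if u: "u \<in> W" for u
    proof -
      have uL: "u \<in> L" using u WL by blast
      have "0 \<notin> insert v W" using indep_not0[OF ind] .
      then have u0: "u \<noteq> 0" using u by blast
      obtain a0 where a0: "a0 * u = e" using P1[OF uL u0 eL] by blast
      define T where "T = Tf u"
      have T: "inE T" "\<And>u'. u' \<in> W - {u} \<Longrightarrow> ev T u' = 0" "ev T u = u"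
        using Tf[OF u] unfolding T_def by blast+
      define w where "w = ev T v"
      have wL: "w \<in> L" unfolding w_def using ev_L[OF T(1) vL] .
      have kill2: "ev T' v = 0" if T': "inE T'" "\<And>u'. u' \<in> W - {u} \<Longrightarrow> ev T' u' = 0" "ev T' u = 0" for T'
        using kill[OF T'(1)] T'(2,3) by blast
      have ue: "u * e = u" using re[OF uL] .
      let ?S1 = "map (\<lambda>p. (u * a0 * fst p, snd p)) T @ map (\<lambda>p. (- fst p, snd p)) T"
      have evS1: "ev ?S1 x = u * a0 * ev T x - ev T x" for x
        by (simp add: ev_lmul ev_neg)
      have "ev ?S1 v = 0"
      proof (rule kill2)
        show "inE ?S1" using T(1) by (intro inE_append inE_lmul inE_neg)
        show "ev ?S1 u' = 0" if "u' \<in> W - {u}" for u' using T(2)[OF that] unfolding evS1 by simp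
        have "u * a0 * u = u" using a0 ue by (simp add: mult.assoc)
        then show "ev ?S1 u = 0" using T(3) unfolding evS1 by simp
      qed
      then have w1: "u * a0 * w = w" unfolding w_def unfolding evS1 by simp
      define d where "d = e * a0 * w"
      have ud: "u * d = w" unfolding d_def using w1 ue by (metis mult.assoc)
      have de1: "e * d = d" unfolding d_def by (simp add: mult.assoc eel)
      have de2: "d * e = d" unfolding d_def using re[OF wL] by (simp add: mult.assoc)
      have "d \<in> F"
      proof (rule Fmax[OF de1 de2], rule ballI)
        fix f assume f: "f \<in> F"
        have fe: "e * f = f" "f * e = f" using FD[OF f] by auto
        let ?S2 = "map (\<lambda>p. (fst p, snd p * f)) T @ map (\<lambda>p. (- (u * f * a0) * fst p, snd p)) T"
        have evS2: "ev ?S2 x = ev T x * f + (- (u * f * a0)) * ev T x" for x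
          by (simp only: ev_append ev_lmul ev_rmul)
        have "ev ?S2 v = 0"
        proof (rule kill2)
          show "inE ?S2" using T(1) f by (intro inE_append inE_lmul inE_rmul)
          show "ev ?S2 u' = 0" if "u' \<in> W - {u}" for u' using T(2)[OF that] unfolding evS2 by simp
          have "u * f * a0 * u = u * f" using a0 fe by (simp add: mult.assoc)
          then show "ev ?S2 u = 0" using T(3) unfolding evS2 by simp
        qed
        then have "w * f = u * f * a0 * w" unfolding w_def unfolding evS2 by (simp add: eq_neg_iff_add_eq_0)
        also have "\<dots> = u * f * d" unfolding d_def using fe(2) by (metis mult.assoc)
        finally have "u * (d * f) = u * (f * d)" using ud by (metis mult.assoc)
        then have "u * (d * f - f * d) = 0" by (simp add: right_diff_distrib)
        moreover have "e * (d * f - f * d) = d * f - f * d"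
          using de1 fe by (simp add: right_diff_distrib mult.assoc[symmetric])
        moreover have "(d * f - f * d) * e = d * f - f * d"
          using de2 fe by (simp add: left_diff_distrib mult.assoc)
        ultimately have "d * f - f * d = 0" using uD0[OF uL u0] by blast
        then show "d * f = f * d" by simp
      qed
      moreover have "ev (Tf u) v = u * d" using ud unfolding w_def T_def by simp
      ultimately show ?thesis by blast
    qed
    then have "\<forall>u\<in>W. \<exists>d. d \<in> F \<and> ev (Tf u) v = u * d" by blast
    then obtain dfun where dfun: "\<And>u. u \<in> W \<Longrightarrow> dfun u \<in> F \<and> ev (Tf u) v = u * dfun u"
      by (metis bchoice)
    obtain ws where ws: "set ws = W" "distinct ws" using finite_distinct_list[OF fW] by blast
    let ?S3 = "(1, e) # map (\<lambda>p. (- fst p, snd p)) (concat (map Tf ws))"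
    have evS3: "ev ?S3 x = x * e - (\<Sum>u\<in>W. ev (Tf u) x)" for x
      using ws by (simp add: ev_neg ev_concat sum_list_distinct_conv_sum_set)
    have "ev ?S3 v = 0"
    proof (rule kill)
      show "inE ?S3" using eF Tf ws by (intro inE_Cons inE_neg inE_concat) auto
      show "\<forall>u\<in>W. ev ?S3 u = 0"
      proof
        fix u' assume u': "u' \<in> W"
        have "(\<Sum>u\<in>W. ev (Tf u) u') = ev (Tf u') u' + (\<Sum>u\<in>W - {u'}. ev (Tf u) u')"
          using fW u' by (rule sum.remove)
        also have "(\<Sum>u\<in>W - {u'}. ev (Tf u) u') = 0"
          by (rule sum.neutral) (use Tf u' in blast)
        finally have "(\<Sum>u\<in>W. ev (Tf u) u') = u'" using Tf[OF u'] by simp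
        then show "ev ?S3 u' = 0" using re u' WL unfolding evS3 by auto
      qed
    qed
    then have "v = (\<Sum>u\<in>W. ev (Tf u) v)" using re[OF vL] unfolding evS3 by simp
    also have "\<dots> = (\<Sum>u\<in>W. u * dfun u)" by (rule sum.cong) (use dfun in auto)
    finally have vsum: "v = (\<Sum>u\<in>W. u * dfun u)" .
    let ?c = "\<lambda>u. if u = v then - e else dfun u"
    have "(\<Sum>u\<in>insert v W. u * ?c u) = v * (- e) + (\<Sum>u\<in>W. u * ?c u)"
      using fW vW by simp
    also have "(\<Sum>u\<in>W. u * ?c u) = (\<Sum>u\<in>W. u * dfun u)"
      by (rule sum.cong) (use vW in auto)
    also have "v * (- e) = - v" using re[OF vL] by simp
    finally have s0: "(\<Sum>u\<in>insert v W. u * ?c u) = 0" using vsum by simp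
    have cF: "\<And>u. u \<in> insert v W \<Longrightarrow> ?c u \<in> F" using dfun Fneg[OF eF] by auto
    have "?c v = 0" using indepD[OF ind cF s0 insertI1] by simp
    then have "e = 0" by simp
    then show ?thesis using enz by blast
  qed
qed

end

context basisloc begin

lemma trE:
  assumes tr0: "\<And>a. tr a = 0"
  shows "inE T \<Longrightarrow> (\<Sum>u\<in>B. coord (ev T u) u) = 0"
proof (induction T)
  case Nil then show ?case by (simp add: coord_0)
next
  case (Cons p T)
  have pF: "snd p \<in> F" and TE: "inE T" using Cons.prems by (auto simp: inE_def)
  have "(\<Sum>u\<in>B. coord (ev (p # T) u) u) = (\<Sum>u\<in>B. coord (fst p * u) u * snd p + coord (ev T u) u)"
  proof (rule sum.cong[OF refl])
    fix u assume u: "u \<in> B"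
    have uL: "u \<in> L" using u BL by blast
    have "coord (ev (p # T) u) u = coord (fst p * u * snd p) u + coord (ev T u) u"
      using coord_add[OF LF[OF LmB[OF u] pF] ev_L[OF TE uL] u] by simp
    also have "coord (fst p * u * snd p) u = coord (fst p * u) u * snd p"
      by (rule coord_mulF[OF LmB[OF u] pF u])
    finally show "coord (ev (p # T) u) u = coord (fst p * u) u * snd p + coord (ev T u) u" .
  qed
  also have "\<dots> = tr (fst p) * snd p + (\<Sum>u\<in>B. coord (ev T u) u)"
    unfolding tr_def by (simp add: sum.distrib sum_distrib_right)
  also have "\<dots> = 0" using tr0 Cons.IH[OF TE] by simp
  finally show ?case .
qed

lemma not_univ: "commutator_space scale \<noteq> UNIV"
proof
  assume U: "commutator_space scale = UNIV"
  have tr0: "\<And>a. tr a = 0" using tr_comm_space U by blast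
  have "B \<noteq> {}"
  proof
    assume "B = {}"
    then have "inspan {} e" using Bspan[OF eL] by simp
    then have "e = 0" unfolding inspan_def by simp
    then show False using enz by blast
  qed
  then obtain b where b: "b \<in> B" by blast
  have "finite (B - {b})" using fB by simp
  moreover have "indepF (insert b (B - {b}))" using b Bind by (simp add: insert_absorb)
  moreover have "b \<notin> B - {b}" by simp
  ultimately obtain T where T: "inE T" "\<forall>u\<in>B - {b}. ev T u = 0" "ev T b = b"
    using density by blast
  have "(\<Sum>u\<in>B. coord (ev T u) u) = coord (ev T b) b + (\<Sum>u\<in>B - {b}. coord (ev T u) u)"
    using fB b by (rule sum.remove)
  also have "(\<Sum>u\<in>B - {b}. coord (ev T u) u) = 0"
    by (rule sum.neutral) (use T(2) coord_0 in auto)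
  also have "coord (ev T b) b = e" using T(3) coord_basis[OF b b] by simp
  finally have "(\<Sum>u\<in>B. coord (ev T u) u) = e" by simp
  then show False using trE[OF tr0 T(1)] enz by simp
qed

end

context salg begin

lemma comm_not_univ: "commutator_space scale \<noteq> UNIV"
proof -
  obtain L e where Le: "lideal L" "\<forall>w\<in>L. w \<noteq> 0 \<longrightarrow> (\<forall>v\<in>L. \<exists>a. a*w = v)"
     "e \<in> L" "e*e = e" "e \<noteq> 0" "\<forall>v\<in>L. v*e = v"
    using ex_idem by blast
  let ?D = "{x. e*x = x \<and> x*e = x}"
  let ?A = "{S. S \<subseteq> ?D \<and> (\<forall>f\<in>S. \<forall>g\<in>S. f*g = g*f)}"
  have "\<exists>M\<in>?A. \<forall>X\<in>?A. M \<subseteq> X \<longrightarrow> X = M"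
  proof (rule subset_Zorn)
    fix C assume C: "subset.chain ?A C"
    have "\<Union>C \<in> ?A"
    proof -
      have CA: "C \<subseteq> ?A" and ch: "\<forall>X\<in>C. \<forall>Y\<in>C. X \<subseteq> Y \<or> Y \<subseteq> X"
        using C unfolding subset_chain_def by blast+
      have "\<Union>C \<subseteq> ?D" using CA by blast
      moreover have "\<forall>f\<in>\<Union>C. \<forall>g\<in>\<Union>C. f*g = g*f"
      proof (intro ballI)
        fix f g assume "f \<in> \<Union>C" "g \<in> \<Union>C"
        then obtain X Y where XY: "X \<in> C" "Y \<in> C" "f \<in> X" "g \<in> Y" by blast
        then have "X \<subseteq> Y \<or> Y \<subseteq> X" using ch by blast
        then show "f*g = g*f" using XY CA by blast
      qed
      ultimately show ?thesis by blast
    qed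
    moreover have "\<forall>X\<in>C. X \<subseteq> \<Union>C" by blast
    ultimately show "\<exists>U\<in>?A. \<forall>X\<in>C. X \<subseteq> U" by (rule bexI[rotated])
  qed
  then obtain F where F: "F \<in> ?A" and Fm0: "\<forall>X\<in>?A. F \<subseteq> X \<longrightarrow> X = F" by (rule bexE)
  have Fm: "\<And>X. X \<in> ?A \<Longrightarrow> F \<subseteq> X \<Longrightarrow> X = F" using Fm0 by simp
  have "mainloc scale L e F"
  proof (unfold_locales)
    show "lideal L" by (rule Le(1))
    show "\<And>w v. w \<in> L \<Longrightarrow> w \<noteq> 0 \<Longrightarrow> v \<in> L \<Longrightarrow> \<exists>a. a*w = v" using Le(2) by blast
    show "e \<in> L" "e*e = e" "e \<noteq> 0" by (rule Le(3), rule Le(4), rule Le(5))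
    show "\<And>v. v \<in> L \<Longrightarrow> v*e = v" using Le(6) by blast
    show "\<And>f. f \<in> F \<Longrightarrow> e*f = f \<and> f*e = f" using F by blast
    show "\<And>f g. f \<in> F \<Longrightarrow> g \<in> F \<Longrightarrow> f*g = g*f" using F by blast
    fix x assume x: "e*x = x" "x*e = x" "\<forall>f\<in>F. x*f = f*x"
    have "insert x F \<in> ?A" using F x by auto
    then have "insert x F = F" by (rule Fm) (rule subset_insertI)
    then show "x \<in> F" by blast
  qed
  then interpret m: mainloc scale L e F .
  obtain B where B: "m.indepF B" "\<forall>v\<in>L. m.inspan B v" using m.ex_Fbasis by blast
  interpret b: basisloc scale L e F B
    by (unfold_locales) (use B in blast)+
  show ?thesis by (rule b.not_univ)
qed

end

theorem lemma2p1:
  fixes scale :: "'k::field \<Rightarrow> 'a::ring_1 \<Rightarrow> 'a" and c :: 'a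
  assumes "fin_dim_algebra scale"
    and "simple_algebra scale"
    and "{c * a | a. True} \<subseteq> commutator_space scale"
  shows "c = 0"
proof (rule ccontr)
  assume c: "c \<noteq> 0"
  interpret salg scale using assms(1,2) by (unfold_locales)
  have "commutator_space scale = UNIV" by (rule step1[OF c assms(3)])
  then show False using comm_not_univ by blast
qed

end
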